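(* Let $\mu$ be a distribution over $\{0,1\}^V$ and $\theta\in(0,1)$. Let $\pi^{(t)}_{\mathrm{GD}}$ be the law at time $t$ of the Glauber dynamics on $\pi$ started from $\mathsf{lift}(\mathbf 1_V)$, i.e. $\pi^{(0)}_{\mathrm{GD}}$ is the law of $\mathsf{lift}(\mathbf 1_V)$ and $\pi^{(t)}_{\mathrm{GD}}=\pi^{(t-1)}_{\mathrm{GD}}P_{\pi\text{-GD}}$. Then for every $t\ge0$, $\pi^{(t)}_{\mathrm{GD}}P_{\mathrm{cl}}=\pi^{(t)}_{\mathrm{GD}}$.
   Context: $\mathsf{lift}$: random map $\{0,1\}^V\to\{0,1,\star\}^V$, independently per coordinate $0\mapsto0$, $1\mapsto\star$ w.p. $1-\theta$, $1\mapsto1$ w.p. $\theta$. $\mathsf{contr}:\{0,1,\star\}^V\to\{0,1\}^V$: $0\mapsto0$, $1,\star\mapsto1$ coordinatewise. $\pi$ is the law of $\mathsf{lift}(X)$ for $X\sim\mu$, with support $\Omega(\pi)$. $P_{\pi\text{-GD}}$ is the Glauber dynamics on $\pi$: pick $v$ uniformly, resample $X_v$ from $\pi$ conditioned on $X_{V\setminus\{v\}}$. $P_{\mathrm{cl}}$ is the Markov chain sending $X$ to the random configuration $\mathsf{lift}(\mathsf{contr}(X))$. Distributions are row vectors acting on transition matrices from the left. *)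

theory Defs
  imports "HOL-Probability.Probability"
begin

text \<open>Spins of the lifted model: 0, 1 and star. Configurations on the finite
vertex set V (a finite type 'v) are functions 'v => bool (for {0,1}, True = 1)
and 'v => lspin (for {0,1,star}).\<close>

datatype lspin = L0 | L1 | LStar

definition lift_coord :: "real \<Rightarrow> bool \<Rightarrow> lspin pmf" where
  "lift_coord \<theta> b =
     (if b then map_pmf (\<lambda>c. if c then L1 else LStar) (bernoulli_pmf \<theta>)
      else return_pmf L0)"

definition lift :: "real \<Rightarrow> ('v::finite \<Rightarrow> bool) \<Rightarrow> ('v \<Rightarrow> lspin) pmf" where
  "lift \<theta> x = Pi_pmf UNIV L0 (\<lambda>v. lift_coord \<theta> (x v))"

definition contr :: "('v \<Rightarrow> lspin) \<Rightarrow> ('v \<Rightarrow> bool)" where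
  "contr X = (\<lambda>v. X v \<noteq> L0)"

text \<open>pi = law of lift(X) for X ~ mu.\<close>
definition lifted_dist :: "('v::finite \<Rightarrow> bool) pmf \<Rightarrow> real \<Rightarrow> ('v \<Rightarrow> lspin) pmf" where
  "lifted_dist \<mu> \<theta> = bind_pmf \<mu> (lift \<theta>)"

text \<open>Convention: if the conditioning
event has zero p-probability, the configuration is left unchanged.\<close>
definition glauber_step :: "('v::finite \<Rightarrow> 'a) pmf \<Rightarrow> ('v \<Rightarrow> 'a) \<Rightarrow> ('v \<Rightarrow> 'a) pmf" where
  "glauber_step p X =
     bind_pmf (pmf_of_set UNIV) (\<lambda>v.
       let S = {Y. \<forall>u. u \<noteq> v \<longrightarrow> Y u = X u} in
       if set_pmf p \<inter> S = {} then return_pmf X else cond_pmf p S)"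

definition P_cl :: "real \<Rightarrow> ('v::finite \<Rightarrow> lspin) \<Rightarrow> ('v \<Rightarrow> lspin) pmf" where
  "P_cl \<theta> X = lift \<theta> (contr X)"

primrec gd_law :: "('v::finite \<Rightarrow> bool) pmf \<Rightarrow> real \<Rightarrow> nat \<Rightarrow> ('v \<Rightarrow> lspin) pmf" where
  "gd_law \<mu> \<theta> 0 = lift \<theta> (\<lambda>_. True)"
| "gd_law \<mu> \<theta> (Suc t) = bind_pmf (gd_law \<mu> \<theta> t) (glauber_step (lifted_dist \<mu> \<theta>))"

end

theory Submission
  imports Defs
begin

instance lspin :: finite
proof
  show "finite (UNIV :: lspin set)"
    by (rule finite_subset[of _ "{L0,L1,LStar}"]) (use lspin.exhaust in auto)
qed

lemma UNIV_lspin: "(UNIV :: lspin set) = {L0, L1, LStar}"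
  using lspin.exhaust by auto

definition wc :: "real \<Rightarrow> lspin \<Rightarrow> real" where
  "wc \<theta> c = (case c of L0 \<Rightarrow> 1 | L1 \<Rightarrow> \<theta> | LStar \<Rightarrow> 1 - \<theta>)"

definition w :: "real \<Rightarrow> ('v::finite \<Rightarrow> lspin) \<Rightarrow> real" where
  "w \<theta> X = (\<Prod>v\<in>UNIV. wc \<theta> (X v))"

definition good :: "real \<Rightarrow> ('v::finite \<Rightarrow> lspin) pmf \<Rightarrow> (('v \<Rightarrow> bool) \<Rightarrow> real) \<Rightarrow> bool" where
  "good \<theta> p F \<longleftrightarrow> (\<forall>Y. pmf p Y = F (contr Y) * w \<theta> Y)"

lemma pmf_lift_coord:
  assumes "0 \<le> \<theta>" "\<theta> \<le> 1"
  shows "pmf (lift_coord \<theta> b) c = (if (c \<noteq> L0) = b then wc \<theta> c else 0)"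
proof (cases b)
  case True
  have "pmf (lift_coord \<theta> b) c = measure (bernoulli_pmf \<theta>) ((\<lambda>c. if c then L1 else LStar) -` {c})"
    using True by (simp add: lift_coord_def pmf_map)
  also have "\<dots> = (if (c \<noteq> L0) = b then wc \<theta> c else 0)"
  proof -
    have "(\<lambda>c. if c then L1 else LStar) -` {c} = (if c = L1 then {True} else if c = LStar then {False} else {})"
      by (cases c) (auto split: if_splits)
    then show ?thesis
      using True assms by (cases c) (auto simp: wc_def measure_pmf_single)
  qed
  finally show ?thesis .
next
  case False
  then show ?thesis by (cases c) (auto simp: lift_coord_def wc_def)
qed

lemma pmf_lift:
  assumes "0 \<le> \<theta>" "\<theta> \<le> 1"
  shows "pmf (lift \<theta> x) Y = (if contr Y = x then w \<theta> Y else 0)"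
proof -
  have "pmf (lift \<theta> x) Y = (\<Prod>v\<in>UNIV. pmf (lift_coord \<theta> (x v)) (Y v))"
    unfolding lift_def by (subst pmf_Pi) auto
  also have "\<dots> = (\<Prod>v\<in>UNIV. (if (Y v \<noteq> L0) = x v then wc \<theta> (Y v) else 0))"
    using assms by (simp add: pmf_lift_coord)
  also have "\<dots> = (if contr Y = x then w \<theta> Y else 0)"
  proof (cases "contr Y = x")
    case True
    then show ?thesis by (auto simp: w_def contr_def)
  next
    case False
    then obtain v where "(Y v \<noteq> L0) \<noteq> x v" by (auto simp: contr_def)
    then show ?thesis using False by (subst prod_zero) auto
  qed
  finally show ?thesis .
qed

lemma pmf_bind_fin:
  fixes N :: "'a::finite pmf"
  shows "pmf (bind_pmf N f) y = (\<Sum>x\<in>UNIV. pmf N x * pmf (f x) y)"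
  by (simp add: pmf_bind integral_measure_pmf_real[where A=UNIV] mult.commute)

lemma sum_w:
  assumes "0 \<le> \<theta>" "\<theta> \<le> 1"
  shows "(\<Sum>Y\<in>{Y. contr Y = x}. w \<theta> Y) = 1"
proof -
  have "1 = (\<Sum>Y\<in>UNIV. pmf (lift \<theta> x) Y)" by (simp add: sum_pmf_eq_1)
  also have "\<dots> = (\<Sum>Y\<in>UNIV. if contr Y = x then w \<theta> Y else 0)"
    using assms by (simp add: pmf_lift)
  also have "\<dots> = (\<Sum>Y\<in>{Y. contr Y = x}. w \<theta> Y)"
    by (simp add: sum.If_cases)
  finally show ?thesis by simp
qed


lemma w_upd:
  "w \<theta> (X(v:=c)) = wc \<theta> c * (\<Prod>u\<in>-{v}. wc \<theta> (X u))"
proof -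
  have "w \<theta> (X(v:=c)) = wc \<theta> c * (\<Prod>u\<in>UNIV-{v}. wc \<theta> ((X(v:=c)) u))"
    unfolding w_def by (subst prod.remove[of UNIV v]) auto
  also have "(\<Prod>u\<in>UNIV-{v}. wc \<theta> ((X(v:=c)) u)) = (\<Prod>u\<in>-{v}. wc \<theta> (X u))"
    by (rule prod.cong) (auto simp: Compl_eq_Diff_UNIV)
  finally show ?thesis .
qed

lemma w_self: "w \<theta> X = wc \<theta> (X v) * (\<Prod>u\<in>-{v}. wc \<theta> (X u))"
  using w_upd[of \<theta> X v "X v"] by simp

lemma contr_upd: "contr (X(v:=c)) = (contr X)(v := (c \<noteq> L0))"
  by (auto simp: contr_def)

lemma measure_S:
  fixes p :: "('v::finite \<Rightarrow> lspin) pmf"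
  assumes "good \<theta> p F"
  shows "measure p {Y. \<forall>u. u \<noteq> v \<longrightarrow> Y u = X u}
     = (F ((contr X)(v:=False)) + F ((contr X)(v:=True))) * (\<Prod>u\<in>-{v}. wc \<theta> (X u))"
proof -
  have S: "{Y. \<forall>u. u \<noteq> v \<longrightarrow> Y u = X u} = (\<lambda>c. X(v:=c)) ` UNIV"
  proof (intro set_eqI iffI)
    fix Y assume "Y \<in> {Y. \<forall>u. u \<noteq> v \<longrightarrow> Y u = X u}"
    then have "Y = X(v := Y v)" by auto
    then show "Y \<in> (\<lambda>c. X(v:=c)) ` UNIV" by blast
  qed auto
  have inj: "inj (\<lambda>c. X(v:=c))"
    by (rule injI) (metis fun_upd_same)
  have "measure p {Y. \<forall>u. u \<noteq> v \<longrightarrow> Y u = X u} = (\<Sum>c\<in>UNIV. pmf p (X(v:=c)))"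
    unfolding S by (simp add: measure_measure_pmf_finite sum.reindex[OF inj])
  also have "\<dots> = (\<Sum>c\<in>UNIV. F ((contr X)(v := (c \<noteq> L0))) * (wc \<theta> c * (\<Prod>u\<in>-{v}. wc \<theta> (X u))))"
    using assms by (simp add: good_def w_upd contr_upd)
  also have "\<dots> = (F ((contr X)(v:=False)) + F ((contr X)(v:=True))) * (\<Prod>u\<in>-{v}. wc \<theta> (X u))"
    by (simp add: UNIV_lspin wc_def algebra_simps)
  finally show ?thesis .
qed

lemma wo_pos:
  assumes "0 < \<theta>" "\<theta> < 1"
  shows "(\<Prod>u\<in>A. wc \<theta> (X u)) > 0"
proof (rule prod_pos)
  fix u show "0 < wc \<theta> (X u)" using assms by (cases "X u") (auto simp: wc_def)
qed

definition K :: "(('v \<Rightarrow> bool) \<Rightarrow> real) \<Rightarrow> (('v \<Rightarrow> bool) \<Rightarrow> real) \<Rightarrow> 'v \<Rightarrow> ('v \<Rightarrow> bool) \<Rightarrow> real" where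
  "K F G v z = (if G (z(v:=False)) + G (z(v:=True)) = 0 then F z
     else G z * (F (z(v:=False)) + F (z(v:=True))) / (G (z(v:=False)) + G (z(v:=True))))"

lemma step_v:
  fixes \<nu> \<pi> :: "('v::finite \<Rightarrow> lspin) pmf"
  assumes th: "0 < \<theta>" "\<theta> < 1" and gn: "good \<theta> \<nu> F" and gp: "good \<theta> \<pi> G"
  shows "good \<theta> (bind_pmf \<nu> (\<lambda>X. let S = {Y. \<forall>u. u \<noteq> v \<longrightarrow> Y u = X u} in
       if set_pmf \<pi> \<inter> S = {} then return_pmf X else cond_pmf \<pi> S)) (K F G v)"
  unfolding good_def
proof
  fix Y
  define S where "S = {Z :: 'v \<Rightarrow> lspin. \<forall>u. u \<noteq> v \<longrightarrow> Z u = Y u}"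
  define g where "g = (\<lambda>X. let S = {Y. \<forall>u. u \<noteq> v \<longrightarrow> Y u = X u} in
       if set_pmf \<pi> \<inter> S = {} then return_pmf X else cond_pmf \<pi> S)"
  define E where "E = (set_pmf \<pi> \<inter> S = {})"
  define h where "h = (\<lambda>X. if E then (if X = Y then 1 else 0) else pmf \<pi> Y / measure \<pi> S)"
  have YS: "Y \<in> S" by (simp add: S_def)
  have out: "pmf (g X) Y = 0" if "X \<notin> S" for X
  proof -
    have "Y \<notin> {Z. \<forall>u. u \<noteq> v \<longrightarrow> Z u = X u}" "X \<noteq> Y" using that by (auto simp: S_def)
    then show ?thesis unfolding g_def Let_def
      by (auto simp: pmf_cond)
  qed
  have inn: "pmf (g X) Y = h X" if "X \<in> S" for X
  proof -
    have SX: "{Z. \<forall>u. u \<noteq> v \<longrightarrow> Z u = X u} = S" using that by (auto simp: S_def)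
    show ?thesis unfolding g_def Let_def SX h_def E_def
      using YS by (auto simp: pmf_cond)
  qed
  have "pmf (bind_pmf \<nu> g) Y = (\<Sum>X\<in>UNIV. pmf \<nu> X * pmf (g X) Y)" by (rule pmf_bind_fin)
  also have "\<dots> = (\<Sum>X\<in>S. pmf \<nu> X * h X)"
    by (rule sum.mono_neutral_cong_right) (auto simp: out inn)
  finally have eq: "pmf (bind_pmf \<nu> g) Y = (\<Sum>X\<in>S. pmf \<nu> X * h X)" .
  define z where "z = contr Y"
  define a where "a = G (z(v:=False)) + G (z(v:=True))"
  define wo where "wo = (\<Prod>u\<in>-{v}. wc \<theta> (Y u))"
  have wo: "wo > 0" unfolding wo_def using th by (rule wo_pos)
  have mp: "measure \<pi> S = a * wo" unfolding S_def a_def wo_def z_def by (rule measure_S[OF gp])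
  have mn: "measure \<nu> S = (F (z(v:=False)) + F (z(v:=True))) * wo"
    unfolding S_def z_def wo_def by (rule measure_S[OF gn])
  have "pmf (bind_pmf \<nu> g) Y = K F G v z * w \<theta> Y"
  proof (cases E)
    case True
    then have "measure \<pi> S = 0" unfolding E_def by (simp add: measure_pmf_zero_iff)
    with mp wo have a0: "a = 0" by simp
    have "pmf (bind_pmf \<nu> g) Y = (\<Sum>X\<in>S. if X = Y then pmf \<nu> X else 0)"
      unfolding eq h_def using True by (intro sum.cong) auto
    also have "\<dots> = pmf \<nu> Y" using YS by (simp add: sum.delta')
    finally show ?thesis using gn a0 unfolding good_def K_def a_def z_def by simp
  next
    case False
    then have "measure \<pi> S \<noteq> 0" unfolding E_def by (simp add: measure_pmf_zero_iff)
    with mp have a0: "a \<noteq> 0" by simp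
    have "pmf (bind_pmf \<nu> g) Y = (\<Sum>X\<in>S. pmf \<nu> X) * (pmf \<pi> Y / measure \<pi> S)"
      unfolding eq h_def using False by (simp add: sum_distrib_right sum_divide_distrib)
    also have "(\<Sum>X\<in>S. pmf \<nu> X) = measure \<nu> S" by (simp add: measure_measure_pmf_finite)
    finally have "pmf (bind_pmf \<nu> g) Y = (F (z(v:=False)) + F (z(v:=True))) * wo * (G z * w \<theta> Y / (a * wo))"
      using gp mn mp unfolding good_def z_def by simp
    also have "\<dots> = K F G v z * w \<theta> Y"
      using a0 wo unfolding K_def a_def[symmetric] by (simp add: field_simps)
    finally show ?thesis .
  qed
  then show "pmf (bind_pmf \<nu> g) Y = K F G v (contr Y) * w \<theta> Y" by (simp add: z_def)
qed

lemma good_glauber: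
  fixes \<nu> \<pi> :: "('v::finite \<Rightarrow> lspin) pmf"
  assumes th: "0 < \<theta>" "\<theta> < 1" and gn: "good \<theta> \<nu> F" and gp: "good \<theta> \<pi> G"
  shows "good \<theta> (bind_pmf \<nu> (glauber_step \<pi>)) (\<lambda>z. (\<Sum>v\<in>UNIV. K F G v z) / real (card (UNIV :: 'v set)))"
proof -
  have "bind_pmf \<nu> (glauber_step \<pi>) = bind_pmf (pmf_of_set UNIV) (\<lambda>v. bind_pmf \<nu> (\<lambda>X.
       let S = {Y. \<forall>u. u \<noteq> v \<longrightarrow> Y u = X u} in
       if set_pmf \<pi> \<inter> S = {} then return_pmf X else cond_pmf \<pi> S))"
    unfolding glauber_step_def by (rule bind_commute_pmf)
  then show ?thesis
    using step_v[OF th gn gp]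
    by (simp add: good_def pmf_bind_pmf_of_set sum_divide_distrib sum_distrib_right)
qed

lemma good_pi:
  assumes "0 \<le> \<theta>" "\<theta> \<le> 1"
  shows "good \<theta> (lifted_dist \<mu> \<theta>) (pmf \<mu>)"
  unfolding good_def
proof
  fix Y :: "'a \<Rightarrow> lspin"
  have "pmf (lifted_dist \<mu> \<theta>) Y = (\<Sum>x\<in>UNIV. if x = contr Y then pmf \<mu> x * w \<theta> Y else 0)"
    unfolding lifted_dist_def pmf_bind_fin using assms
    by (intro sum.cong) (auto simp: pmf_lift)
  then show "pmf (lifted_dist \<mu> \<theta>) Y = pmf \<mu> (contr Y) * w \<theta> Y" by simp
qed

lemma good_base:
  assumes "0 \<le> \<theta>" "\<theta> \<le> 1"
  shows "good \<theta> (lift \<theta> (\<lambda>_. True)) (\<lambda>z. if z = (\<lambda>_. True) then 1 else 0)"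
  using assms by (simp add: good_def pmf_lift)

lemma good_invariant:
  assumes "0 \<le> \<theta>" "\<theta> \<le> 1" and "good \<theta> \<nu> F"
  shows "bind_pmf \<nu> (P_cl \<theta>) = \<nu>"
proof (rule pmf_eqI)
  fix Y
  have "pmf (bind_pmf \<nu> (P_cl \<theta>)) Y = (\<Sum>X\<in>UNIV. if X \<in> {X. contr X = contr Y} then F (contr Y) * w \<theta> Y * w \<theta> X else 0)"
    unfolding pmf_bind_fin P_cl_def using assms
    by (intro sum.cong) (auto simp: pmf_lift good_def)
  also have "\<dots> = F (contr Y) * w \<theta> Y * (\<Sum>X\<in>{X. contr X = contr Y}. w \<theta> X)"
    by (simp add: sum.If_cases sum_distrib_left)
  also have "\<dots> = pmf \<nu> Y" using assms by (simp add: sum_w good_def)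
  finally show "pmf (bind_pmf \<nu> (P_cl \<theta>)) Y = pmf \<nu> Y" .
qed

theorem lemma3p4:
  fixes \<mu> :: "('v::finite \<Rightarrow> bool) pmf" and \<theta> :: real
  assumes "0 < \<theta>" and "\<theta> < 1"
  shows "\<forall>t. bind_pmf (gd_law \<mu> \<theta> t) (P_cl \<theta>) = gd_law \<mu> \<theta> t"
proof
  fix t
  have "\<exists>F. good \<theta> (gd_law \<mu> \<theta> t) F"
  proof (induction t)
    case 0
    have "good \<theta> (lift \<theta> (\<lambda>_. True)) (\<lambda>z. if z = (\<lambda>_. True) then 1 else 0)"
      by (rule good_base) (use assms in auto)
    then show ?case by auto
  next
    case (Suc t)
    then obtain F where gF: "good \<theta> (gd_law \<mu> \<theta> t) F" by blast
    show ?case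
      using good_glauber[OF assms gF good_pi] assms by auto
  qed
  then obtain F where gF: "good \<theta> (gd_law \<mu> \<theta> t) F" by blast
  show "bind_pmf (gd_law \<mu> \<theta> t) (P_cl \<theta>) = gd_law \<mu> \<theta> t"
    by (rule good_invariant[OF _ _ gF]) (use assms in auto)
qed

end
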